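(* Let $(\mu_i,\mathcal{S}_i,L_i,\pi_i)_{i=1}^n$ be irreducible, reversible continuous-time finite Markov chains, $p_1,\dots,p_n>0$ with $\sum_ip_i\le1$, and $(\mu,\mathcal{S},L,\pi)$ the product chain. With $\varrho_l,\rho_l,\psi_l,\varphi_l,j(c),\tilde j(c)$ as defined in the context, \[\varrho_{j(c)}\le\rho_{\tilde j(c)}\le\varrho_{j(e^c-1)}\quad\text{for all }c>0,\] with the conventions $\min\emptyset=\infty$ (and the corresponding eigenvalue $=\infty$).
   Context: Product chain: $\mathcal{S}=\prod_{i=1}^n\mathcal{S}_i$, $\mu=\prod_i\mu_i$, $\pi=\prod_i\pi_i$, $L=\sum_{i=1}^np_iI_1\otimes\cdots\otimes I_{i-1}\otimes L_i\otimes I_{i+1}\otimes\cdots\otimes I_n$. Let $0=\lambda_{i,0}\le\lambda_{i,1}\le\dots\le\lambda_{i,|\mathcal{S}_i|-1}$ be the eigenvalues of $-L_i$ with $L^2(\pi_i)$-orthonormal right eigenvectors $\phi_{i,0}=\mathbf1,\phi_{i,1},\dots$. Let $\Gamma=\{J=(j_1,\dots,j_n):0\le j_i<|\mathcal{S}_i|\}$, and for $J\in\Gamma$ set $\lambda_J=\sum_ip_i\lambda_{i,j_i}$, $\phi_J=\prod_i\phi_{i,j_i}$ (tensor product), and $\mu(\phi_J)=\prod_i\mu_i(\phi_{i,j_i})$ where $\mu_i(\phi)=\sum_x\mu_i(x)\phi(x)$. Enumerate $\{\lambda_J:J\in\Gamma,J\ne\mathbf0\}$ as $\varrho_1\le\varrho_2\le\cdots$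 with $\psi_l$ the corresponding $\mu(\phi_J)$; enumerate $\{p_i\lambda_{i,j}:1\le j<|\mathcal{S}_i|,1\le i\le n\}$ as $\rho_1\le\rho_2\le\cdots$ with $\varphi_l$ the corresponding $\mu_i(\phi_{i,j})$. For $c>0$: $j(c)=\min\{j\ge1:\sum_{l=1}^j\psi_l^2>c\}$ and $\tilde j(c)=\min\{j\ge1:\sum_{l=1}^j\varphi_l^2>c\}$. *)

theory Defs
  imports "HOL-Analysis.Analysis" "HOL-Library.Extended_Nat" "HOL-Library.Extended_Real"
begin

definition generator :: "'s set \<Rightarrow> ('s \<Rightarrow> 's \<Rightarrow> real) \<Rightarrow> bool" where
  "generator S L \<longleftrightarrow> finite S \<and> S \<noteq> {} \<and>
     (\<forall>x\<in>S. \<forall>y\<in>S. x \<noteq> y \<longrightarrow> L x y \<ge> 0) \<and>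
     (\<forall>x\<in>S. (\<Sum>y\<in>S. L x y) = 0)"

definition irreducible_gen :: "'s set \<Rightarrow> ('s \<Rightarrow> 's \<Rightarrow> real) \<Rightarrow> bool" where
  "irreducible_gen S L \<longleftrightarrow>
     (\<forall>x\<in>S. \<forall>y\<in>S. x \<noteq> y \<longrightarrow> (x, y) \<in> {(u, v). u \<in> S \<and> v \<in> S \<and> u \<noteq> v \<and> L u v > 0}\<^sup>+)"

definition prob_dist :: "'s set \<Rightarrow> ('s \<Rightarrow> real) \<Rightarrow> bool" where
  "prob_dist S m \<longleftrightarrow> (\<forall>x\<in>S. m x \<ge> 0) \<and> (\<Sum>x\<in>S. m x) = 1"

definition stationary :: "'s set \<Rightarrow> ('s \<Rightarrow> 's \<Rightarrow> real) \<Rightarrow> ('s \<Rightarrow> real) \<Rightarrow> bool" where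
  "stationary S L pd \<longleftrightarrow> prob_dist S pd \<and> (\<forall>y\<in>S. (\<Sum>x\<in>S. pd x * L x y) = 0)"

definition reversible :: "'s set \<Rightarrow> ('s \<Rightarrow> 's \<Rightarrow> real) \<Rightarrow> ('s \<Rightarrow> real) \<Rightarrow> bool" where
  "reversible S L pd \<longleftrightarrow> (\<forall>x\<in>S. \<forall>y\<in>S. pd x * L x y = pd y * L y x)"

definition eigen_decomp ::
  "'s set \<Rightarrow> ('s \<Rightarrow> 's \<Rightarrow> real) \<Rightarrow> ('s \<Rightarrow> real) \<Rightarrow> (nat \<Rightarrow> real) \<Rightarrow> (nat \<Rightarrow> 's \<Rightarrow> real) \<Rightarrow> bool" where
  "eigen_decomp S L pd lam phi \<longleftrightarrow>
     lam 0 = 0 \<and> (\<forall>x\<in>S. phi 0 x = 1) \<and>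
     (\<forall>j k. j \<le> k \<and> k < card S \<longrightarrow> lam j \<le> lam k) \<and>
     (\<forall>j < card S. \<forall>x\<in>S. (\<Sum>y\<in>S. L x y * phi j y) = - lam j * phi j x) \<and>
     (\<forall>j < card S. \<forall>k < card S. (\<Sum>x\<in>S. pd x * phi j x * phi k x) = (if j = k then 1 else 0))"

definition first_index :: "nat \<Rightarrow> (nat \<Rightarrow> real) \<Rightarrow> real \<Rightarrow> enat" where
  "first_index M psi c =
     (if \<exists>j. 1 \<le> j \<and> j \<le> M \<and> (\<Sum>l=1..j. (psi l)\<^sup>2) > c
      then enat (LEAST j. 1 \<le> j \<and> j \<le> M \<and> (\<Sum>l=1..j. (psi l)\<^sup>2) > c)
      else \<infinity>)"

definition val_at :: "(nat \<Rightarrow> real) \<Rightarrow> enat \<Rightarrow> ereal" where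
  "val_at rho k = (case k of enat j \<Rightarrow> ereal (rho j) | \<infinity> \<Rightarrow> \<infinity>)"

end

theory Submission
  imports Defs
begin

lemma fi_enat:
  assumes "first_index N g c = enat t"
  shows "1 \<le> t \<and> t \<le> N \<and> (\<Sum>l=1..t. (g l)\<^sup>2) > c"
proof -
  have ex: "\<exists>j. 1 \<le> j \<and> j \<le> N \<and> (\<Sum>l=1..j. (g l)\<^sup>2) > c"
    using assms unfolding first_index_def by (auto split: if_splits)
  then have "t = (LEAST j. 1 \<le> j \<and> j \<le> N \<and> (\<Sum>l=1..j. (g l)\<^sup>2) > c)"
    using assms unfolding first_index_def by auto
  then show ?thesis using LeastI_ex[OF ex] by simp
qed

lemma initial_seg:
  fixes f g :: "nat \<Rightarrow> real"
  assumes mono: "\<And>l l'. 1 \<le> l \<Longrightarrow> l \<le> l' \<Longrightarrow> l' \<le> N \<Longrightarrow> f l \<le> f l'"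
    and c: "c \<ge> 0" and s: "(\<Sum>l\<in>{l\<in>{1..N}. f l \<le> r}. (g l)\<^sup>2) > c"
  shows "val_at f (first_index N g c) \<le> ereal r"
proof -
  define A where "A = {l\<in>{1..N}. f l \<le> r}"
  have fin: "finite A" unfolding A_def by auto
  have ne: "A \<noteq> {}" using s c unfolding A_def[symmetric] by auto
  define K where "K = Max A"
  have KA: "K \<in> A" using fin ne K_def by auto
  have AK: "A = {1..K}"
  proof
    show "A \<subseteq> {1..K}" using fin K_def A_def by auto
    show "{1..K} \<subseteq> A"
    proof
      fix x assume x: "x \<in> {1..K}"
      have "f x \<le> f K" using x KA mono[of x K] unfolding A_def by auto
      then show "x \<in> A" using x KA unfolding A_def by auto
    qed
  qed
  have ex: "\<exists>j. 1 \<le> j \<and> j \<le> N \<and> (\<Sum>l=1..j. (g l)\<^sup>2) > c"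
    using s KA AK unfolding A_def[symmetric] by (intro exI[of _ K]) (auto simp: A_def)
  define j0 where "j0 = (LEAST j. 1 \<le> j \<and> j \<le> N \<and> (\<Sum>l=1..j. (g l)\<^sup>2) > c)"
  have fi: "first_index N g c = enat j0" using ex unfolding first_index_def j0_def by auto
  have j0: "1 \<le> j0" using LeastI_ex[OF ex] j0_def by simp
  have "j0 \<le> K" unfolding j0_def
    using s KA AK unfolding A_def[symmetric] by (intro Least_le) (auto simp: A_def)
  then have "f j0 \<le> f K" using mono[of j0 K] j0 KA by (auto simp: A_def)
  then have "f j0 \<le> r" using KA by (auto simp: A_def)
  then show ?thesis using fi by (simp add: val_at_def)
qed


theorem lemmaB1:
  fixes n :: nat
    and S :: "nat \<Rightarrow> 's set"
    and L :: "nat \<Rightarrow> 's \<Rightarrow> 's \<Rightarrow> real"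
    and mu ppi :: "nat \<Rightarrow> 's \<Rightarrow> real"
    and p :: "nat \<Rightarrow> real"
    and lam :: "nat \<Rightarrow> nat \<Rightarrow> real"
    and phi :: "nat \<Rightarrow> nat \<Rightarrow> 's \<Rightarrow> real"
    and M M' :: nat
    and e :: "nat \<Rightarrow> (nat \<Rightarrow> nat)"
    and e' :: "nat \<Rightarrow> nat \<times> nat"
  assumes n_pos: "n \<ge> 1"
    and chains: "\<And>i. i < n \<Longrightarrow> generator (S i) (L i) \<and> irreducible_gen (S i) (L i)
                   \<and> stationary (S i) (L i) (ppi i) \<and> reversible (S i) (L i) (ppi i)
                   \<and> prob_dist (S i) (mu i)"
    and eig: "\<And>i. i < n \<Longrightarrow> eigen_decomp (S i) (L i) (ppi i) (lam i) (phi i)"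
    and p_pos: "\<And>i. i < n \<Longrightarrow> p i > 0"
    and p_sum: "(\<Sum>i<n. p i) \<le> 1"
    and e_bij: "bij_betw e {1..M}
                  ((Pi\<^sub>E {..<n} (\<lambda>i. {..<card (S i)})) - {restrict (\<lambda>_. 0) {..<n}})"
    and e_mono: "\<And>l l'. 1 \<le> l \<Longrightarrow> l \<le> l' \<Longrightarrow> l' \<le> M \<Longrightarrow>
                   (\<Sum>i<n. p i * lam i (e l i)) \<le> (\<Sum>i<n. p i * lam i (e l' i))"
    and e'_bij: "bij_betw e' {1..M'} {(i, j). i < n \<and> 1 \<le> j \<and> j < card (S i)}"
    and e'_mono: "\<And>l l'. 1 \<le> l \<Longrightarrow> l \<le> l' \<Longrightarrow> l' \<le> M' \<Longrightarrow>
                   p (fst (e' l)) * lam (fst (e' l)) (snd (e' l))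
                     \<le> p (fst (e' l')) * lam (fst (e' l')) (snd (e' l'))"
  defines "varrho \<equiv> (\<lambda>l. \<Sum>i<n. p i * lam i (e l i))"
    and "psi \<equiv> (\<lambda>l. \<Prod>i<n. \<Sum>x\<in>S i. mu i x * phi i (e l i) x)"
    and "rho \<equiv> (\<lambda>l. p (fst (e' l)) * lam (fst (e' l)) (snd (e' l)))"
    and "vphi \<equiv> (\<lambda>l. \<Sum>x\<in>S (fst (e' l)). mu (fst (e' l)) x * phi (fst (e' l)) (snd (e' l)) x)"
  shows "\<forall>c>0. val_at varrho (first_index M psi c) \<le> val_at rho (first_index M' vphi c)
              \<and> val_at rho (first_index M' vphi c) \<le> val_at varrho (first_index M psi (exp c - 1))"
proof -
  define m where "m = (\<lambda>i j. \<Sum>x\<in>S i. mu i x * phi i j x)"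
  have fin: "finite (S i) \<and> S i \<noteq> {}" if "i < n" for i
    using chains[OF that] unfolding generator_def by auto
  have cardpos: "card (S i) \<ge> 1" if "i < n" for i
    using fin[OF that] by (simp add: Suc_le_eq card_gt_0_iff)
  have lam0: "lam i 0 = 0" if "i < n" for i
    using eig[OF that] unfolding eigen_decomp_def by auto
  have lamnn: "lam i j \<ge> 0" if "i < n" "j < card (S i)" for i j
    using eig[OF that(1)] that(2) unfolding eigen_decomp_def by (metis le0)
  have m0: "m i 0 = 1" if "i < n" for i
  proof -
    have "m i 0 = (\<Sum>x\<in>S i. mu i x)"
      unfolding m_def using eig[OF that] unfolding eigen_decomp_def by (auto intro: sum.cong)
    also have "\<dots> = 1" using chains[OF that] unfolding prob_dist_def by auto
    finally show ?thesis .
  qed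
  have psi_eq: "psi l = (\<Prod>i<n. m i (e l i))" for l unfolding psi_def m_def by simp
  have vphi_eq: "vphi l = m (fst (e' l)) (snd (e' l))" for l unfolding vphi_def m_def by simp
  define Gam where "Gam = Pi\<^sub>E {..<n} (\<lambda>i. {..<card (S i)})"
  define z where "z = restrict (\<lambda>_. 0::nat) {..<n}"
  define sg where "sg = (\<lambda>q::nat\<times>nat. restrict (\<lambda>k. if k = fst q then snd q else (0::nat)) {..<n})"
  define P where "P = {(i, j). i < n \<and> 1 \<le> j \<and> j < card (S i)}"
  have sg_in: "sg q \<in> Gam - {z}" if "q \<in> P" for q
  proof -
    have "sg q \<in> Gam" using that cardpos unfolding sg_def Gam_def P_def by (auto simp: PiE_iff Suc_le_eq)
    moreover have "sg q (fst q) \<noteq> z (fst q)" using that unfolding sg_def z_def P_def by auto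
    ultimately show ?thesis by auto
  qed
  have sg_inj: "inj_on sg P"
  proof
    fix q r assume q: "q \<in> P" and r: "r \<in> P" and eq: "sg q = sg r"
    have "sg q (fst q) = snd q" using q unfolding sg_def P_def by auto
    moreover have "sg r (fst q) = (if fst q = fst r then snd r else 0)" using q unfolding sg_def P_def by auto
    ultimately have "fst q = fst r \<and> snd q = snd r" using eq q unfolding P_def by (auto split: if_splits)
    then show "q = r" by (simp add: prod_eq_iff)
  qed
  have sg_psi: "(\<Prod>i<n. m i (sg q i)) = m (fst q) (snd q)" if "q \<in> P" for q
  proof -
    have "(\<Prod>i<n. m i (sg q i)) = (\<Prod>i<n. if i = fst q then m (fst q) (snd q) else 1)"
      using m0 unfolding sg_def by (intro prod.cong) auto
    also have "\<dots> = m (fst q) (snd q)" using that unfolding P_def by (subst prod.delta) auto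
    finally show ?thesis .
  qed
  have sg_lam: "(\<Sum>i<n. p i * lam i (sg q i)) = p (fst q) * lam (fst q) (snd q)" if "q \<in> P" for q
  proof -
    have "(\<Sum>i<n. p i * lam i (sg q i)) = (\<Sum>i<n. if i = fst q then p (fst q) * lam (fst q) (snd q) else 0)"
      using lam0 unfolding sg_def by (intro sum.cong) auto
    also have "\<dots> = p (fst q) * lam (fst q) (snd q)" using that unfolding P_def by (subst sum.delta) auto
    finally show ?thesis .
  qed
  have eimg: "e ` {1..M} = Gam - {z}" using e_bij unfolding bij_betw_def Gam_def z_def by auto
  have einj: "inj_on e {1..M}" using e_bij unfolding bij_betw_def by auto
  have e'img: "e' ` {1..M'} = P" using e'_bij unfolding bij_betw_def P_def by auto
  have e'inj: "inj_on e' {1..M'}" using e'_bij unfolding bij_betw_def by auto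
  define h where "h = (\<lambda>l'. inv_into {1..M} e (sg (e' l')))"
  have h_in: "h l' \<in> {1..M}" and eh: "e (h l') = sg (e' l')" if "l' \<in> {1..M'}" for l'
  proof -
    have "e' l' \<in> P" using e'img that by auto
    then have "sg (e' l') \<in> e ` {1..M}" using sg_in eimg by blast
    then show "h l' \<in> {1..M}" "e (h l') = sg (e' l')" unfolding h_def
      by (rule inv_into_into, rule f_inv_into_f)
  qed
  have h_inj: "inj_on h {1..M'}"
  proof
    fix a b assume a: "a \<in> {1..M'}" and b: "b \<in> {1..M'}" and eq: "h a = h b"
    have "sg (e' a) = sg (e' b)" using eh[OF a] eh[OF b] eq by simp
    then have "e' a = e' b" using sg_inj e'img a b by (auto dest: inj_onD)
    then show "a = b" using e'inj a b by (auto dest: inj_onD)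
  qed
  have psi_h: "psi (h l') = vphi l'" if "l' \<in> {1..M'}" for l'
  proof -
    have "e' l' \<in> P" using e'img that by auto
    then show ?thesis using psi_eq[of "h l'"] eh[OF that] sg_psi[of "e' l'"] vphi_eq[of l'] by simp
  qed
  have varrho_h: "varrho (h l') = rho l'" if "l' \<in> {1..M'}" for l'
  proof -
    have "e' l' \<in> P" using e'img that by auto
    then show ?thesis using eh[OF that] sg_lam[of "e' l'"] unfolding varrho_def rho_def by simp
  qed
  have emono': "\<And>l l'. 1 \<le> l \<Longrightarrow> l \<le> l' \<Longrightarrow> l' \<le> M \<Longrightarrow> varrho l \<le> varrho l'"
    using e_mono unfolding varrho_def by auto
  have e'mono': "\<And>l l'. 1 \<le> l \<Longrightarrow> l \<le> l' \<Longrightarrow> l' \<le> M' \<Longrightarrow> rho l \<le> rho l'"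
    using e'_mono unfolding rho_def by auto
  show ?thesis
  proof (intro allI impI conjI)
    fix c :: real assume c: "c > 0"
    show "val_at varrho (first_index M psi c) \<le> val_at rho (first_index M' vphi c)"
    proof (cases "first_index M' vphi c")
      case infinity
      then show ?thesis by (simp add: val_at_def)
    next
      case (enat t)
      note t = fi_enat[OF enat]
      let ?A = "{l\<in>{1..M}. varrho l \<le> rho t}"
      have sub: "h ` {1..t} \<subseteq> ?A"
      proof
        fix x assume "x \<in> h ` {1..t}"
        then obtain l' where l': "l' \<in> {1..t}" "x = h l'" by auto
        then have l'M: "l' \<in> {1..M'}" using t by auto
        show "x \<in> ?A" using h_in[OF l'M] varrho_h[OF l'M] e'mono'[of l' t] l' t by auto
      qed
      have "c < (\<Sum>l=1..t. (vphi l)\<^sup>2)" using t by simp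
      also have "\<dots> = (\<Sum>l'\<in>{1..t}. (psi (h l'))\<^sup>2)" using psi_h t by (intro sum.cong) auto
      also have "\<dots> = (\<Sum>l\<in>h ` {1..t}. (psi l)\<^sup>2)"
        using h_inj t by (subst sum.reindex) (auto intro: inj_on_subset)
      also have "\<dots> \<le> (\<Sum>l\<in>?A. (psi l)\<^sup>2)" using sub by (intro sum_mono2) auto
      finally have "val_at varrho (first_index M psi c) \<le> ereal (rho t)"
        using c by (intro initial_seg[OF emono']) auto
      then show ?thesis using enat by (simp add: val_at_def)
    qed
  next
    fix c :: real assume c: "c > 0"
    show "val_at rho (first_index M' vphi c) \<le> val_at varrho (first_index M psi (exp c - 1))"
    proof (cases "first_index M psi (exp c - 1)")
      case infinity
      then show ?thesis by (simp add: val_at_def)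
    next
      case (enat j1)
      note j1 = fi_enat[OF enat]
      define r where "r = varrho j1"
      let ?A = "{l\<in>{1..M'}. rho l \<le> r}"
      have "(\<Sum>l\<in>?A. (vphi l)\<^sup>2) > c"
      proof (rule ccontr)
        assume "\<not> ?thesis"
        then have le: "(\<Sum>l\<in>?A. (vphi l)\<^sup>2) \<le> c" by simp
        define E where "E = (\<lambda>i. {j. 1 \<le> j \<and> j < card (S i) \<and> p i * lam i j \<le> r})"
        define a where "a = (\<lambda>i. (\<Sum>j\<in>E i. (m i j)\<^sup>2))"
        define Q where "Q = Sigma {..<n} E"
        have finE: "finite (E i)" for i unfolding E_def by auto
        have bijA: "bij_betw e' ?A Q"
          unfolding bij_betw_def
        proof
          show "inj_on e' ?A" using e'inj by (rule inj_on_subset) auto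
          show "e' ` ?A = Q"
          proof
            show "e' ` ?A \<subseteq> Q"
            proof
              fix q assume "q \<in> e' ` ?A"
              then obtain l where l: "l \<in> {1..M'}" "rho l \<le> r" "q = e' l" by auto
              have "q \<in> P" using l e'img by auto
              then show "q \<in> Q" using l unfolding Q_def E_def P_def rho_def by auto
            qed
            show "Q \<subseteq> e' ` ?A"
            proof
              fix q assume q: "q \<in> Q"
              then have "q \<in> P" unfolding Q_def E_def P_def by auto
              then obtain l where l: "l \<in> {1..M'}" "q = e' l" using e'img by auto
              have "rho l \<le> r" using q l unfolding Q_def E_def rho_def by auto
              then show "q \<in> e' ` ?A" using l by auto
            qed
          qed
        qed
        have "(\<Sum>l\<in>?A. (vphi l)\<^sup>2) = (\<Sum>l\<in>?A. (m (fst (e' l)) (snd (e' l)))\<^sup>2)"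
          using vphi_eq by simp
        also have "\<dots> = (\<Sum>q\<in>Q. (m (fst q) (snd q))\<^sup>2)"
          using sum.reindex_bij_betw[OF bijA, of "\<lambda>q. (m (fst q) (snd q))\<^sup>2"] by simp
        also have "\<dots> = (\<Sum>i<n. a i)" unfolding Q_def a_def
          using finE by (subst sum.Sigma) (auto simp: split_def)
        finally have suma: "(\<Sum>i<n. a i) \<le> c" using le by simp
        have anonneg: "a i \<ge> 0" for i unfolding a_def by (intro sum_nonneg) auto
        define D where "D = (\<lambda>i. insert 0 (E i))"
        have finD: "finite (D i)" for i unfolding D_def using finE by auto
        have "(\<Prod>i<n. \<Sum>j\<in>D i. (m i j)\<^sup>2) = (\<Prod>i<n. 1 + a i)"
        proof (intro prod.cong refl)
          fix i assume "i \<in> {..<n}"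
          then have "m i 0 = 1" using m0 by auto
          moreover have "0 \<notin> E i" unfolding E_def by auto
          ultimately show "(\<Sum>j\<in>D i. (m i j)\<^sup>2) = 1 + a i"
            unfolding D_def a_def using finE by (subst sum.insert) auto
        qed
        also have "\<dots> \<le> (\<Prod>i<n. exp (a i))"
          using anonneg by (intro prod_mono) (auto simp: add_nonneg_nonneg)
        also have "\<dots> = exp (\<Sum>i<n. a i)" by (simp add: exp_sum)
        also have "\<dots> \<le> exp c" using suma by simp
        finally have prodle: "(\<Prod>i<n. \<Sum>j\<in>D i. (m i j)\<^sup>2) \<le> exp c" .
        have pse: "(\<Prod>i<n. \<Sum>j\<in>D i. (m i j)\<^sup>2) = (\<Sum>J\<in>Pi\<^sub>E {..<n} D. \<Prod>i<n. (m i (J i))\<^sup>2)"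
          using finD by (intro prod_sum_PiE) auto
        define psiJ where "psiJ = (\<lambda>J. \<Prod>i<n. m i (J i))"
        have psiJ2: "(psiJ J)\<^sup>2 = (\<Prod>i<n. (m i (J i))\<^sup>2)" for J
          unfolding psiJ_def by (simp add: prod_power_distrib)
        have zin: "z \<in> Pi\<^sub>E {..<n} D" unfolding z_def D_def by auto
        have psiz: "psiJ z = 1" unfolding psiJ_def z_def using m0 by simp
        have finPi: "finite (Pi\<^sub>E {..<n} D)" using finD by (intro finite_PiE) auto
        have sub: "e ` {1..j1} \<subseteq> Pi\<^sub>E {..<n} D - {z}"
        proof
          fix J assume "J \<in> e ` {1..j1}"
          then obtain l where l: "l \<in> {1..j1}" "J = e l" by auto
          have lM: "l \<in> {1..M}" using l j1 by auto
          have JG: "J \<in> Gam - {z}" using eimg lM l by auto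
          have vl: "varrho l \<le> r" unfolding r_def using emono'[of l j1] l j1 by auto
          have "J \<in> Pi\<^sub>E {..<n} D"
          proof (unfold PiE_iff, intro conjI ballI)
            fix i assume i: "i \<in> {..<n}"
            have Ji: "J i < card (S i)" using JG i unfolding Gam_def by auto
            have "p i * lam i (J i) \<le> (\<Sum>k<n. p k * lam k (J k))"
            proof (rule member_le_sum)
              show "i \<in> {..<n}" by fact
              fix k assume k: "k \<in> {..<n} - {i}"
              have "J k < card (S k)" using JG k unfolding Gam_def by auto
              then show "0 \<le> p k * lam k (J k)" using lamnn[of k "J k"] p_pos[of k] k by auto
            qed simp
            also have "\<dots> = varrho l" unfolding varrho_def l(2) by simp
            finally have "p i * lam i (J i) \<le> r" using vl by simp
            then show "J i \<in> D i" using Ji unfolding D_def E_def by auto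
          next
            show "J \<in> extensional {..<n}" using JG unfolding Gam_def by (auto simp: PiE_iff)
          qed
          then show "J \<in> Pi\<^sub>E {..<n} D - {z}" using JG by auto
        qed
        have "exp c - 1 < (\<Sum>l=1..j1. (psi l)\<^sup>2)" using j1 by simp
        also have "\<dots> = (\<Sum>l\<in>{1..j1}. (psiJ (e l))\<^sup>2)" unfolding psiJ_def psi_eq by simp
        also have "\<dots> = (\<Sum>J\<in>e ` {1..j1}. (psiJ J)\<^sup>2)"
          using einj j1 by (subst sum.reindex) (auto intro: inj_on_subset)
        also have "\<dots> \<le> (\<Sum>J\<in>Pi\<^sub>E {..<n} D - {z}. (psiJ J)\<^sup>2)"
          using sub finPi by (intro sum_mono2) auto
        also have "\<dots> = (\<Sum>J\<in>Pi\<^sub>E {..<n} D. (psiJ J)\<^sup>2) - 1"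
          using finPi zin psiz by (simp add: sum_diff1)
        also have "\<dots> = (\<Prod>i<n. \<Sum>j\<in>D i. (m i j)\<^sup>2) - 1" using pse psiJ2 by simp
        also have "\<dots> \<le> exp c - 1" using prodle by simp
        finally show False by simp
      qed
      then have "val_at rho (first_index M' vphi c) \<le> ereal r"
        using c by (intro initial_seg[OF e'mono']) auto
      then show ?thesis using enat r_def by (simp add: val_at_def)
    qed
  qed
qed

end
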